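(* Let $N\ge1$, $1\le C\le N$, $T\ge 1$ be integers and $x^T\in[N]^T$ any request sequence. For every integer $k\ge 0$, $$T\big(\tilde{\mu}_k(x^T)-\pi^{\textsc{LZ}}(x^T)\big)\le \delta\big(c(T),L_T^{*,LZ}\big)+k\,c(T),$$ where $\delta(B,l)=\sqrt{2BCl\ln(Ne/C)}+CB\ln(Ne/C)$, $c(T)$ is the total number of nodes of the Lempel–Ziv parse tree after the $T$ requests (which is $O(T\log N/\log T)$), and $L_T^{*,LZ}$ is the minimum number of cache misses on $x^T$ of an offline prefetcher whose state at each round is the current node of the same Lempel–Ziv tree process and which caches a fixed set of $C$ files at each node.
   Context: Caching setting: a library of $N$ unit-sized files $[N]$ and a cache holding $C$ files; in round $t$ a (possibly random) set of $C$ files is cached, then $x_t\in[N]$ is requested, giving a hit (reward 1) if $x_t$ is cached and 0 otherwise. Hit rate = expected number of hits divided by $T$. A $k$-th order Markov prefetcher is a finite-state prefetcher with state set $[N]^k$ whose state at round $t$ is $(x_{t-1},\dots,x_{t-k})$ and which caches a set $f(s)$ of $C$ files depending only on the current state $s$; $\tilde\mu_k(x^T)$ is the maximum hit rate on $x^T$ over all such prefetching functions $f$. The LZ prefetcher: maintain an $N$-ary tree, initially a root with $N$ leaf children, and a current node, initially the root. At each round the current node is the state; each node runs its own independent copy of the \textsc{Sage} caching policy, fed only with requests arriving while that node is current, and the cache is chosen by the copy at the current node. After request $x_t$, move to the child labeled $x_t$; if that child is a leaf, make it an internal node by adding $N$ leaf children and return the current node to the root. $\pi^{\textsc{LZ}}(x^T)$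 is its hit rate. \textsc{Sage} policy: with learning rate $\eta>0$ and $R(i)$ the number of past requests (in its own stream) for file $i$, set $w(i)=\exp(\eta R(i))$ and marginals $p(i)=w(i)e_{C-1}(\mathbf w_{-i})/e_C(\mathbf w)$ ($e_m$ the elementary symmetric polynomial of order $m$, $\mathbf w_{-i}$ omitting coordinate $i$; these are the file-inclusion marginals of Hedge over all $C$-subsets of $[N]$ with reward $\mathbb 1(x_t\in A)$), and cache a random $C$-set with these marginals via Madow's systematic sampling (draw $U\sim\mathrm{Unif}[0,1]$, $P_0=0$, $P_i=P_{i-1}+p(i)$, select for each $m=0,\dots,C-1$ the $j$ with $P_{j-1}\le U+m\le P_j$). The learning rate is tuned adaptively so that on any stream of length $n$ its expected hits are at least those of the best fixed $C$-set minus $\sqrt{2Cl^*\ln(Ne/C)}+C\ln(Ne/C)$, $l^*$ being the misses of the best fixed $C$-set. *)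

theory Defs
  imports "HOL-Analysis.Analysis"
begin

text \<open>Files are the naturals below N, i.e. [N] = {..<N}. Rounds are 0-indexed:
  round t (t < T) serves request xs ! t.\<close>

definition lnNeC :: "nat \<Rightarrow> nat \<Rightarrow> real" where
  "lnNeC N C = ln (real N * exp 1 / real C)"

definition delta :: "nat \<Rightarrow> nat \<Rightarrow> nat \<Rightarrow> nat \<Rightarrow> real" where
  "delta N C B l = sqrt (2 * real B * real C * real l * lnNeC N C) + real C * real B * lnNeC N C"

definition esym :: "nat \<Rightarrow> nat set \<Rightarrow> (nat \<Rightarrow> real) \<Rightarrow> real" where
  "esym m I w = (\<Sum>S\<in>{S. S \<subseteq> I \<and> card S = m}. \<Prod>i\<in>S. w i)"

text \<open>Sage marginals after seeing its own stream s; eta s is the (adaptively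
  chosen) learning rate, which may depend on the stream seen so far.\<close>
definition sage_weight :: "(nat list \<Rightarrow> real) \<Rightarrow> nat list \<Rightarrow> nat \<Rightarrow> real" where
  "sage_weight eta s i = exp (eta s * real (count_list s i))"

definition sage_marg :: "nat \<Rightarrow> nat \<Rightarrow> (nat list \<Rightarrow> real) \<Rightarrow> nat list \<Rightarrow> nat \<Rightarrow> real" where
  "sage_marg N C eta s i =
     sage_weight eta s i * esym (C - 1) ({..<N} - {i}) (sage_weight eta s)
       / esym C {..<N} (sage_weight eta s)"

text \<open>Madow's systematic sampling with marginals p over files 0..N-1 and uniform U = u.\<close>
definition madow :: "nat \<Rightarrow> nat \<Rightarrow> (nat \<Rightarrow> real) \<Rightarrow> real \<Rightarrow> nat set" where
  "madow N C p u = {j. j < N \<and> (\<exists>m<C. (\<Sum>i<j. p i) \<le> u + real m \<and> u + real m \<le> (\<Sum>i<Suc j. p i))}"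

definition sage_hitprob :: "nat \<Rightarrow> nat \<Rightarrow> (nat list \<Rightarrow> real) \<Rightarrow> nat list \<Rightarrow> nat \<Rightarrow> real" where
  "sage_hitprob N C eta s x =
     measure lborel {u \<in> {0..1::real}. x \<in> madow N C (sage_marg N C eta s) u}"

definition csets :: "nat \<Rightarrow> nat \<Rightarrow> nat set set" where
  "csets N C = {A. A \<subseteq> {..<N} \<and> card A = C}"

definition fixed_hits :: "nat list \<Rightarrow> nat set \<Rightarrow> nat" where
  "fixed_hits s A = length (filter (\<lambda>y. y \<in> A) s)"

definition best_fixed_hits :: "nat \<Rightarrow> nat \<Rightarrow> nat list \<Rightarrow> nat" where
  "best_fixed_hits N C s = Max (fixed_hits s ` csets N C)"

definition sage_guarantee :: "nat \<Rightarrow> nat \<Rightarrow> (nat list \<Rightarrow> real) \<Rightarrow> bool" where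
  "sage_guarantee N C eta \<longleftrightarrow>
     (\<forall>s. set s \<subseteq> {..<N} \<longrightarrow>
        (\<Sum>t<length s. sage_hitprob N C eta (take t s) (s ! t))
          \<ge> real (best_fixed_hits N C s)
             - (sqrt (2 * real C * real (length s - best_fixed_hits N C s) * lnNeC N C)
                + real C * lnNeC N C))"

text \<open>init lists the k fictitious requests preceding round 0 (chronologically);
  the state at round t is (x_{t-1},...,x_{t-k}).\<close>
definition mstate :: "nat \<Rightarrow> nat list \<Rightarrow> nat list \<Rightarrow> nat \<Rightarrow> nat list" where
  "mstate k init xs t = rev (take k (drop t (init @ xs)))"

definition markov_hits :: "nat \<Rightarrow> nat list \<Rightarrow> nat list \<Rightarrow> (nat list \<Rightarrow> nat set) \<Rightarrow> nat" where
  "markov_hits k init xs f = card {t. t < length xs \<and> xs ! t \<in> f (mstate k init xs t)}"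

definition mu_tilde :: "nat \<Rightarrow> nat \<Rightarrow> nat \<Rightarrow> nat list \<Rightarrow> nat list \<Rightarrow> real" where
  "mu_tilde N C k init xs =
     real (Max {markov_hits k init xs f | f. \<forall>s. f s \<in> csets N C}) / real (length xs)"

text \<open>Internal nodes are words (paths from the root); the leaves are the children of
  internal nodes that are not internal.  The pair is (internal nodes, current node).\<close>
definition lz_step :: "nat list set \<times> nat list \<Rightarrow> nat \<Rightarrow> nat list set \<times> nat list" where
  "lz_step st x = (let ch = snd st @ [x] in
      if ch \<in> fst st then (fst st, ch) else (insert ch (fst st), []))"

definition lz_run :: "nat list \<Rightarrow> nat list set \<times> nat list" where
  "lz_run xs = foldl lz_step ({[]}, []) xs"

definition lz_state :: "nat list \<Rightarrow> nat \<Rightarrow> nat list" where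
  "lz_state xs t = snd (lz_run (take t xs))"

definition lz_nodes :: "nat \<Rightarrow> nat list \<Rightarrow> nat list set" where
  "lz_nodes N xs = insert [] {v @ [i] | v i. v \<in> fst (lz_run xs) \<and> i < N}"

definition lz_c :: "nat \<Rightarrow> nat list \<Rightarrow> nat" where
  "lz_c N xs = card (lz_nodes N xs)"

definition node_stream :: "nat list \<Rightarrow> nat \<Rightarrow> nat list" where
  "node_stream xs t = map (\<lambda>j. xs ! j) (filter (\<lambda>j. lz_state xs j = lz_state xs t) [0..<t])"

definition pi_LZ :: "nat \<Rightarrow> nat \<Rightarrow> (nat list \<Rightarrow> real) \<Rightarrow> nat list \<Rightarrow> real" where
  "pi_LZ N C eta xs =
     (\<Sum>t<length xs. sage_hitprob N C eta (node_stream xs t) (xs ! t)) / real (length xs)"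

definition lz_misses :: "nat list \<Rightarrow> (nat list \<Rightarrow> nat set) \<Rightarrow> nat" where
  "lz_misses xs f = card {t. t < length xs \<and> xs ! t \<notin> f (lz_state xs t)}"

definition L_star_LZ :: "nat \<Rightarrow> nat \<Rightarrow> nat list \<Rightarrow> nat" where
  "L_star_LZ N C xs = Min {lz_misses xs f | f. \<forall>v. f v \<in> csets N C}"

end

theory Submission imports Defs begin

lemma lz_run_snoc: "lz_run (ys @ [a]) = lz_step (lz_run ys) a"
  by (simp add: lz_run_def)

lemma lz_inv: "finite (fst (lz_run ys)) \<and> [] \<in> fst (lz_run ys) \<and> snd (lz_run ys) \<in> fst (lz_run ys)
   \<and> (\<exists>p. ys = p @ snd (lz_run ys))"
proof (induction ys rule: rev_induct)
  case Nil
  then show ?case by (simp add: lz_run_def)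
next
  case (snoc a ys)
  obtain I v where r: "lz_run ys = (I, v)" by (cases "lz_run ys")
  from snoc r obtain p where p: "ys = p @ v" by auto
  have e: "lz_run (ys @ [a]) = lz_step (I, v) a" using r by (simp add: lz_run_snoc)
  have "ys @ [a] = p @ (v @ [a])" using p by simp
  then show ?case using snoc r e
    by (auto simp: lz_step_def Let_def)
qed

lemma lz_mono: "fst (lz_run ys) \<subseteq> fst (lz_run (ys @ zs))"
proof (induction zs rule: rev_induct)
  case Nil then show ?case by simp
next
  case (snoc a zs)
  then show ?case
    by (auto simp: lz_run_snoc[of "ys @ zs", simplified] lz_step_def Let_def)
qed

lemma lz_run_take_Suc: "t < length xs \<Longrightarrow> lz_run (take (Suc t) xs) = lz_step (lz_run (take t xs)) (xs ! t)"
  by (simp add: take_Suc_conv_app_nth lz_run_snoc)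

lemma card_lt_Suc: "card {t. t < Suc T \<and> P t} = card {t. t < T \<and> P t} + (if P T then 1 else 0)"
proof -
  have "{t. t < Suc T \<and> P t} = (if P T then insert T {t. t < T \<and> P t} else {t. t < T \<and> P t})"
    by (auto simp: less_Suc_eq)
  then show ?thesis by auto
qed

lemma short_count:
  assumes "T \<le> length xs"
  shows "card {t. t < T \<and> length (lz_state xs t) < k} + k
     \<le> k * card (fst (lz_run (take T xs))) + min (length (lz_state xs T)) k"
  using assms
proof (induction T)
  case 0
  then show ?case by (simp add: lz_state_def lz_run_def)
next
  case (Suc T)
  obtain I v where r: "lz_run (take T xs) = (I, v)" by (cases "lz_run (take T xs)")
  have fin: "finite I" using lz_inv[of "take T xs"] r by simp
  have st: "lz_state xs T = v" using r by (simp add: lz_state_def)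
  have IH: "card {t. t < T \<and> length (lz_state xs t) < k} + k \<le> k * card I + min (length v) k"
    using Suc r st by simp
  have rs: "lz_run (take (Suc T) xs) = lz_step (I, v) (xs ! T)"
    using Suc.prems r lz_run_take_Suc by simp
  show ?case
  proof (cases "v @ [xs ! T] \<in> I")
    case True
    then have "lz_run (take (Suc T) xs) = (I, v @ [xs ! T])" using rs by (simp add: lz_step_def)
    then show ?thesis using IH st by (auto simp: card_lt_Suc lz_state_def)
  next
    case False
    then have "lz_run (take (Suc T) xs) = (insert (v @ [xs ! T]) I, [])" using rs by (simp add: lz_step_def)
    moreover have "card (insert (v @ [xs ! T]) I) = Suc (card I)" using fin False by simp
    ultimately show ?thesis using IH st by (auto simp: card_lt_Suc lz_state_def)
  qed
qed

lemma mstate_eq: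
  assumes "length init = k" and "t \<le> length xs" and "k \<le> length (lz_state xs t)"
  shows "mstate k init xs t = rev (drop (length (lz_state xs t) - k) (lz_state xs t))"
proof -
  define v where "v = lz_state xs t"
  obtain p where p: "take t xs = p @ v" using lz_inv[of "take t xs"] by (auto simp: v_def lz_state_def)
  have lt: "length p + length v = t" using arg_cong[OF p, of length] assms(2) by simp
  have "drop t (init @ xs) = drop (t - k) xs" using assms lt by (simp add: v_def)
  then have "take k (drop t (init @ xs)) = drop (t - k) (take t xs)"
    using assms lt by (simp add: take_drop v_def)
  also have "\<dots> = drop (length v - k) v"
  proof -
    have e: "t - k - length p = length v - k" using lt by arith
    have "drop (t - k) (p @ v) = drop (t - k - length p) v" using lt assms(3) by (simp add: v_def)
    then show ?thesis using p e by simp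
  qed
  finally show ?thesis by (simp add: mstate_def v_def)
qed

lemma stream_decomp:
  fixes F :: "'b list \<Rightarrow> 'b \<Rightarrow> 'c::comm_monoid_add"
  shows "(\<Sum>t\<in>{t\<in>{..<T}. st t = v}. F (map x (filter (\<lambda>j. st j = st t) [0..<t])) (x t))
    = (\<Sum>j<length (map x (filter (\<lambda>j. st j = v) [0..<T])).
         F (take j (map x (filter (\<lambda>j. st j = v) [0..<T]))) (map x (filter (\<lambda>j. st j = v) [0..<T]) ! j))"
proof (induction T)
  case 0
  then show ?case by simp
next
  case (Suc T)
  define s where "s = map x (filter (\<lambda>j. st j = v) [0..<T])"
  show ?case
  proof (cases "st T = v")
    case True
    have set: "{t\<in>{..<Suc T}. st t = v} = insert T {t\<in>{..<T}. st t = v}" using True by auto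
    have s': "map x (filter (\<lambda>j. st j = v) [0..<Suc T]) = s @ [x T]" using True by (simp add: s_def)
    have "(\<Sum>j<length (s @ [x T]). F (take j (s @ [x T])) ((s @ [x T]) ! j))
       = (\<Sum>j<length s. F (take j s) (s ! j)) + F s (x T)"
      by (simp add: nth_append)
    then show ?thesis using Suc set s' True by (simp add: s_def add.commute)
  next
    case False
    have set: "{t\<in>{..<Suc T}. st t = v} = {t\<in>{..<T}. st t = v}" using False by (auto simp: less_Suc_eq)
    then show ?thesis using Suc False by simp
  qed
qed

lemma card_group:
  fixes T :: nat
  shows "card {t. t < T \<and> P t} = (\<Sum>v\<in>st ` {..<T}. card {t. t < T \<and> st t = v \<and> P t})"
proof -
  have "{t. t < T \<and> P t} = (\<Union>v\<in>st ` {..<T}. {t. t < T \<and> st t = v \<and> P t})" by auto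
  moreover have "card (\<Union>v\<in>st ` {..<T}. {t. t < T \<and> st t = v \<and> P t})
     = (\<Sum>v\<in>st ` {..<T}. card {t. t < T \<and> st t = v \<and> P t})"
    by (rule card_UN_disjoint) auto
  ultimately show ?thesis by simp
qed

lemma card_filter_stream:
  "card {t. t < T \<and> st t = v \<and> R (x t)} = length (filter R (map x (filter (\<lambda>j. st j = v) [0..<T])))"
proof -
  have "length (filter R (map x (filter (\<lambda>j. st j = v) [0..<T])))
      = length (filter (\<lambda>j. st j = v \<and> R (x j)) [0..<T])"
    by (simp add: filter_map filter_filter comp_def conj_commute)
  also have "\<dots> = card (set (filter (\<lambda>j. st j = v \<and> R (x j)) [0..<T]))"
    by (rule distinct_card[symmetric]) simp
  also have "set (filter (\<lambda>j. st j = v \<and> R (x j)) [0..<T]) = {t. t < T \<and> st t = v \<and> R (x t)}" by auto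
  finally show ?thesis by simp
qed

lemma sqrt_sum_le:
  assumes "finite V" and "\<And>v. v \<in> V \<Longrightarrow> a v \<ge> 0"
  shows "(\<Sum>v\<in>V. sqrt (a v)) \<le> sqrt (real (card V) * (\<Sum>v\<in>V. a v))"
proof -
  have "(\<Sum>v\<in>V. sqrt (a v))\<^sup>2 \<le> (\<Sum>v\<in>V. (sqrt (a v))\<^sup>2) * card V"
    by (rule sum_squared_le_sum_of_squares)
  also have "(\<Sum>v\<in>V. (sqrt (a v))\<^sup>2) = (\<Sum>v\<in>V. a v)" using assms(2) by (intro sum.cong) auto
  finally show ?thesis by (intro real_le_rsqrt) (simp add: mult.commute)
qed

lemma csets_fin: "finite (csets N C)"
  by (rule finite_subset[of _ "Pow {..<N}"]) (auto simp: csets_def)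

lemma csets_ne: "C \<le> N \<Longrightarrow> {..<C} \<in> csets N C"
  by (auto simp: csets_def)

lemma fh_le_best: "C \<le> N \<Longrightarrow> A \<in> csets N C \<Longrightarrow> fixed_hits s A \<le> best_fixed_hits N C s"
  unfolding best_fixed_hits_def using csets_fin by (intro Max_ge) auto

lemma best_le_len: "C \<le> N \<Longrightarrow> best_fixed_hits N C s \<le> length s"
proof -
  assume "C \<le> N"
  then have "best_fixed_hits N C s \<in> fixed_hits s ` csets N C"
    unfolding best_fixed_hits_def using csets_fin csets_ne[OF \<open>C \<le> N\<close>] by (intro Max_in) auto
  then show ?thesis by (auto simp: fixed_hits_def)
qed

lemma lnNeC_ge: "1 \<le> C \<Longrightarrow> C \<le> N \<Longrightarrow> lnNeC N C \<ge> 1"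
proof -
  assume a: "1 \<le> C" "C \<le> N"
  have "real N * exp 1 / real C = (real N / real C) * exp 1" by simp
  moreover have "real N / real C \<ge> 1" using a by simp
  moreover have "ln ((real N / real C) * exp 1) = ln (real N / real C) + ln (exp 1)"
    using a by (intro ln_mult_pos) auto
  ultimately have "ln (real N * exp 1 / real C) = ln (real N / real C) + 1"
    by simp
  moreover have "ln (real N / real C) \<ge> 0" using \<open>real N / real C \<ge> 1\<close> by simp
  ultimately show ?thesis by (simp add: lnNeC_def)
qed

lemma lz_c_ge:
  assumes "N \<ge> 1"
  shows "card (fst (lz_run xs)) + 1 \<le> lz_c N xs"
proof -
  define I where "I = fst (lz_run xs)"
  have fin: "finite I" using lz_inv[of xs] by (simp add: I_def)
  have sub: "insert [] ((\<lambda>v. v @ [0]) ` I) \<subseteq> lz_nodes N xs"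
    using assms by (auto simp: lz_nodes_def I_def)
  have "lz_nodes N xs \<subseteq> insert [] ((\<lambda>(v, i). v @ [i]) ` (I \<times> {..<N}))"
    by (auto simp: lz_nodes_def I_def)
  then have finN: "finite (lz_nodes N xs)" by (rule finite_subset) (simp add: fin)
  have "card (insert [] ((\<lambda>v. v @ [0]) ` I)) = Suc (card I)"
    using fin by (subst card_insert_disjoint) (auto simp: card_image inj_on_def)
  then show ?thesis using card_mono[OF finN sub] by (simp add: lz_c_def I_def)
qed

lemma states_sub: "lz_state xs t \<in> fst (lz_run xs)"
proof -
  have "lz_state xs t \<in> fst (lz_run (take t xs))" using lz_inv[of "take t xs"] by (simp add: lz_state_def)
  also have "\<dots> \<subseteq> fst (lz_run (take t xs @ drop t xs))" by (rule lz_mono)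
  finally show ?thesis by simp
qed

lemma aux_mono:
  fixes a c x y K :: real
  shows "a \<le> c \<Longrightarrow> 0 \<le> a \<Longrightarrow> x \<le> y \<Longrightarrow> 0 \<le> x \<Longrightarrow> 0 \<le> K \<Longrightarrow> a * (K * x) \<le> c * (K * y)"
  by (meson mult_mono mult_left_mono order_trans mult_nonneg_nonneg)

theorem theorem3:
  fixes N C T k :: nat and xs init :: "nat list" and eta :: "nat list \<Rightarrow> real"
  assumes "N \<ge> 1" and "1 \<le> C" and "C \<le> N" and "T \<ge> 1"
    and "length xs = T" and "set xs \<subseteq> {..<N}"
    and "length init = k" and "set init \<subseteq> {..<N}"
    and "\<forall>s. eta s > 0" and "sage_guarantee N C eta"
  shows "real T * (mu_tilde N C k init xs - pi_LZ N C eta xs)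
           \<le> delta N C (lz_c N xs) (L_star_LZ N C xs) + real k * real (lz_c N xs)"
proof -
  define st where "st = lz_state xs"
  define V where "V = st ` {..<T}"
  define sv where "sv v = map (\<lambda>j. xs ! j) (filter (\<lambda>j. st j = v) [0..<T])" for v
  define b where "b v = best_fixed_hits N C (sv v)" for v
  define Ln where "Ln = lnNeC N C"
  define I where "I = fst (lz_run xs)"
  define c where "c = lz_c N xs"
  define L where "L = L_star_LZ N C xs"
  define hp where "hp = sage_hitprob N C eta"
  have finV: "finite V" by (simp add: V_def)
  have finI: "finite I" using lz_inv[of xs] by (simp add: I_def)
  have VI: "V \<subseteq> I" using states_sub by (auto simp: V_def st_def I_def)
  have cI: "card I + 1 \<le> c" using lz_c_ge[OF assms(1)] by (simp add: I_def c_def)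
  have cV: "card V \<le> c" using card_mono[OF finI VI] cI by simp
  have Ln1: "Ln \<ge> 1" using lnNeC_ge assms(2,3) by (simp add: Ln_def)
  have bl: "b v \<le> length (sv v)" for v using best_le_len assms(3) by (simp add: b_def)
  have svN: "set (sv v) \<subseteq> {..<N}" for v
    using assms(5,6) nth_mem by (fastforce simp: sv_def)

  have cnt: "card {t. t < T \<and> xs ! t \<in> g (st t)} = (\<Sum>v\<in>V. fixed_hits (sv v) (g v))" for g
  proof -
    have "card {t. t < T \<and> xs ! t \<in> g (st t)}
        = (\<Sum>v\<in>V. card {t. t < T \<and> st t = v \<and> xs ! t \<in> g (st t)})"
      unfolding V_def by (rule card_group)
    also have "\<dots> = (\<Sum>v\<in>V. card {t. t < T \<and> st t = v \<and> (\<lambda>y. y \<in> g v) ((\<lambda>j. xs ! j) t)})"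
      by (intro sum.cong refl arg_cong[where f=card]) auto
    also have "\<dots> = (\<Sum>v\<in>V. fixed_hits (sv v) (g v))"
      by (intro sum.cong refl, subst card_filter_stream[of T st _ "\<lambda>y. y \<in> g _" "\<lambda>j. xs ! j"])
         (simp add: fixed_hits_def sv_def)
    finally show ?thesis .
  qed

  have F2: "markov_hits k init xs f \<le> (\<Sum>v\<in>V. b v) + k * c" if f: "\<forall>s. f s \<in> csets N C" for f
  proof -
    define g where "g v = f (rev (drop (length v - k) v))" for v
    have sub: "{t. t < T \<and> xs ! t \<in> f (mstate k init xs t)}
       \<subseteq> {t. t < T \<and> xs ! t \<in> g (st t)} \<union> {t. t < T \<and> length (lz_state xs t) < k}"
    proof
      fix t assume t: "t \<in> {t. t < T \<and> xs ! t \<in> f (mstate k init xs t)}"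
      show "t \<in> {t. t < T \<and> xs ! t \<in> g (st t)} \<union> {t. t < T \<and> length (lz_state xs t) < k}"
      proof (cases "length (lz_state xs t) < k")
        case False
        then have "mstate k init xs t = rev (drop (length (st t) - k) (st t))"
          using mstate_eq[OF assms(7), of t xs] t assms(5) by (simp add: st_def)
        then show ?thesis using t by (simp add: g_def)
      qed (use t in auto)
    qed
    have "markov_hits k init xs f \<le> card {t. t < T \<and> xs ! t \<in> g (st t)} + card {t. t < T \<and> length (lz_state xs t) < k}"
      unfolding markov_hits_def assms(5)
      by (rule order_trans[OF card_mono[OF _ sub] card_Un_le]) simp
    moreover have "card {t. t < T \<and> xs ! t \<in> g (st t)} \<le> (\<Sum>v\<in>V. b v)"
      unfolding cnt b_def using f assms(3) by (intro sum_mono fh_le_best) (auto simp: g_def)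
    moreover have "card {t. t < T \<and> length (lz_state xs t) < k} \<le> k * c"
    proof -
      have "card {t. t < T \<and> length (lz_state xs t) < k} + k \<le> k * card I + k"
        using short_count[of T xs k] assms(5) by (simp add: I_def)
      then have "card {t. t < T \<and> length (lz_state xs t) < k} \<le> k * card I" by simp
      also have "\<dots> \<le> k * c" using cI by simp
      finally show ?thesis .
    qed
    ultimately show ?thesis by simp
  qed

  define M where "M = {markov_hits k init xs f | f. \<forall>s. f s \<in> csets N C}"
  have Mfin: "finite M"
  proof (rule finite_subset[of _ "{..T}"])
    show "M \<subseteq> {..T}"
    proof
      fix m assume "m \<in> M"
      then obtain f where "m = markov_hits k init xs f" by (auto simp: M_def)
      moreover have "card {t. t < length xs \<and> xs ! t \<in> f (mstate k init xs t)} \<le> card {..<T}"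
        using assms(5) by (intro card_mono) auto
      ultimately show "m \<in> {..T}" by (simp add: markov_hits_def)
    qed
  qed simp
  have Mne: "M \<noteq> {}" using csets_ne[OF assms(3)] by (auto simp: M_def)
  obtain f0 where f0: "\<forall>s. f0 s \<in> csets N C" "Max M = markov_hits k init xs f0"
    using Max_in[OF Mfin Mne] by (auto simp: M_def)
  have Tpos: "real T > 0" using assms(4) by simp
  have Tmu: "real T * mu_tilde N C k init xs = real (Max M)"
    using Tpos by (simp add: mu_tilde_def M_def assms(5))
  have mu_le: "real T * mu_tilde N C k init xs \<le> (\<Sum>v\<in>V. real (b v)) + real k * real c"
    using Tmu f0 F2[OF f0(1)] by (simp flip: of_nat_sum of_nat_mult)

  have Tpi: "real T * pi_LZ N C eta xs = (\<Sum>v\<in>V. \<Sum>j<length (sv v). hp (take j (sv v)) (sv v ! j))"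
  proof -
    have "real T * pi_LZ N C eta xs = (\<Sum>t<T. hp (node_stream xs t) (xs ! t))"
      using Tpos by (simp add: pi_LZ_def assms(5) hp_def)
    also have "\<dots> = (\<Sum>v\<in>V. \<Sum>t\<in>{t\<in>{..<T}. st t = v}. hp (node_stream xs t) (xs ! t))"
      unfolding V_def by (rule sum.image_gen) simp
    also have "\<dots> = (\<Sum>v\<in>V. \<Sum>j<length (sv v). hp (take j (sv v)) (sv v ! j))"
      unfolding node_stream_def sv_def st_def[symmetric]
      by (rule sum.cong[OF refl], rule stream_decomp)
    finally show ?thesis .
  qed
  have F4: "(\<Sum>j<length (sv v). hp (take j (sv v)) (sv v ! j))
      \<ge> real (b v) - (sqrt (2 * real C * real (length (sv v) - b v) * Ln) + real C * Ln)" for v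
    using assms(10) svN[of v] unfolding sage_guarantee_def b_def hp_def Ln_def by blast

  define LS where "LS = {lz_misses xs f | f. \<forall>v. f v \<in> csets N C}"
  have LSfin: "finite LS"
  proof (rule finite_subset[of _ "{..T}"])
    show "LS \<subseteq> {..T}"
    proof
      fix m assume "m \<in> LS"
      then obtain f where "m = lz_misses xs f" by (auto simp: LS_def)
      moreover have "card {t. t < length xs \<and> xs ! t \<notin> f (lz_state xs t)} \<le> card {..<T}"
        using assms(5) by (intro card_mono) auto
      ultimately show "m \<in> {..T}" by (simp add: lz_misses_def)
    qed
  qed simp
  have LSne: "LS \<noteq> {}" using csets_ne[OF assms(3)] by (auto simp: LS_def)
  obtain f1 where f1: "\<forall>v. f1 v \<in> csets N C" "L = lz_misses xs f1"
    using Min_in[OF LSfin LSne] by (auto simp: LS_def L_def L_star_LZ_def)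
  have F5: "(\<Sum>v\<in>V. length (sv v) - b v) \<le> L"
  proof -
    have "L = card {t. t < T \<and> xs ! t \<in> - f1 (st t)}"
      using f1(2) by (simp add: lz_misses_def assms(5) st_def)
    also have "\<dots> = (\<Sum>v\<in>V. fixed_hits (sv v) (- f1 v))" by (rule cnt)
    also have "\<dots> \<ge> (\<Sum>v\<in>V. length (sv v) - b v)"
    proof (rule sum_mono)
      fix v assume "v \<in> V"
      have "fixed_hits (sv v) (- f1 v) + fixed_hits (sv v) (f1 v) = length (sv v)"
        unfolding fixed_hits_def using sum_length_filter_compl[of "\<lambda>y. y \<in> f1 v" "sv v"] by simp
      moreover have "fixed_hits (sv v) (f1 v) \<le> b v" using f1(1) assms(3) by (simp add: b_def fh_le_best)
      ultimately show "length (sv v) - b v \<le> fixed_hits (sv v) (- f1 v)" by simp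
    qed
    finally show ?thesis .
  qed

  define a where "a v = 2 * real C * real (length (sv v) - b v) * Ln" for v
  have a0: "a v \<ge> 0" for v using Ln1 by (simp add: a_def)
  have sumH: "real T * pi_LZ N C eta xs \<ge> (\<Sum>v\<in>V. real (b v)) - (\<Sum>v\<in>V. sqrt (a v)) - real (card V) * (real C * Ln)"
  proof -
    have "real T * pi_LZ N C eta xs \<ge> (\<Sum>v\<in>V. real (b v) - (sqrt (a v) + real C * Ln))"
      unfolding Tpi a_def by (rule sum_mono) (rule F4)
    then show ?thesis by (simp add: sum_subtractf sum.distrib)
  qed
  have sq: "(\<Sum>v\<in>V. sqrt (a v)) \<le> sqrt (2 * real c * real C * real L * Ln)"
  proof -
    have "(\<Sum>v\<in>V. sqrt (a v)) \<le> sqrt (real (card V) * (\<Sum>v\<in>V. a v))"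
      using sqrt_sum_le[OF finV] a0 by blast
    also have "(\<Sum>v\<in>V. a v) = 2 * real C * Ln * real (\<Sum>v\<in>V. length (sv v) - b v)"
      by (simp add: a_def sum_distrib_left mult_ac)
    also have "real (card V) * (2 * real C * Ln * real (\<Sum>v\<in>V. length (sv v) - b v))
        \<le> real c * (2 * real C * Ln * real L)"
    proof (rule aux_mono)
      show "real (card V) \<le> real c" using cV by simp
      show "real (\<Sum>v\<in>V. length (sv v) - b v) \<le> real L" using F5 by (simp only: of_nat_le_iff)
      show "0 \<le> 2 * real C * Ln" using Ln1 by simp
    qed (simp_all add: sum_nonneg)
    finally show ?thesis by (simp add: mult_ac)
  qed
  have cVL: "real (card V) * (real C * Ln) \<le> real c * (real C * Ln)"
    using cV Ln1 by (intro mult_right_mono) auto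
  have "real T * (mu_tilde N C k init xs - pi_LZ N C eta xs)
      = real T * mu_tilde N C k init xs - real T * pi_LZ N C eta xs" by (simp add: algebra_simps)
  also have "\<dots> \<le> sqrt (2 * real c * real C * real L * Ln) + real C * real c * Ln + real k * real c"
    using mu_le sumH sq cVL by (simp add: algebra_simps)
  finally show ?thesis by (simp add: delta_def c_def L_def Ln_def)
qed

end
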